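(* The subvarieties $\mathsf{BA}$ and $\mathsf{SL}$ of $V(\mathsf{BCA})$ are independent. That is, there is a binary term $\varphi(x,y)$ in the type $\langle\wedge,\vee,\neg,J_2,0,1\rangle$ such that $\mathsf{BA}\models\varphi(x,y)\approx x$ and $\mathsf{SL}\models\varphi(x,y)\approx y$.
   Context: $\mathbf{WK}^e$ is the three-element algebra on $\{0,\tfrac12,1\}$ of type $\langle\wedge,\vee,\neg,J_2,0,1\rangle$. Its operations are: - $\neg$ swaps $0,1$ and fixes $\tfrac12$; - $\wedge,\vee$ are Boolean on $\{0,1\}$ and return $\tfrac12$ if some argument is $\tfrac12$; - $J_2(1)=1$ and $J_2(\tfrac12)=J_2(0)=0$. $\mathsf{BCA}=ISP(\mathbf{WK}^e)$ and $V(\mathsf{BCA})=HSP(\mathbf{WK}^e)$. $\mathsf{BA}$ is the subvariety of $V(\mathsf{BCA})$ axiomatised relative to it by $J_2x\approx x$. $\mathsf{SL}$ is the subvariety axiomatised relative to it by $J_2x\approx1$. *)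

theory Defs
  imports Main "HOL-Library.FuncSet"
begin

text \<open>The three-element algebra WK^e on {0, 1/2, 1}: F = 0, U = 1/2, T = 1.\<close>
datatype wk = F | U | T

fun wk_neg :: "wk \<Rightarrow> wk" where
  "wk_neg F = T" | "wk_neg U = U" | "wk_neg T = F"

fun wk_and :: "wk \<Rightarrow> wk \<Rightarrow> wk" where
  "wk_and U _ = U" | "wk_and _ U = U"
| "wk_and T T = T" | "wk_and T F = F" | "wk_and F T = F" | "wk_and F F = F"

fun wk_or :: "wk \<Rightarrow> wk \<Rightarrow> wk" where
  "wk_or U _ = U" | "wk_or _ U = U"
| "wk_or F F = F" | "wk_or T F = T" | "wk_or F T = T" | "wk_or T T = T"

fun wk_J2 :: "wk \<Rightarrow> wk" where
  "wk_J2 T = T" | "wk_J2 U = F" | "wk_J2 F = F"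

record 'a alg =
  acar :: "'a set"
  ameet :: "'a \<Rightarrow> 'a \<Rightarrow> 'a"
  ajoin :: "'a \<Rightarrow> 'a \<Rightarrow> 'a"
  aneg :: "'a \<Rightarrow> 'a"
  aJ2 :: "'a \<Rightarrow> 'a"
  azero :: 'a
  aone :: 'a

definition is_alg :: "('a, 'b) alg_scheme \<Rightarrow> bool" where
  "is_alg A \<longleftrightarrow> azero A \<in> acar A \<and> aone A \<in> acar A \<and>
     (\<forall>x\<in>acar A. \<forall>y\<in>acar A. ameet A x y \<in> acar A \<and> ajoin A x y \<in> acar A) \<and>
     (\<forall>x\<in>acar A. aneg A x \<in> acar A \<and> aJ2 A x \<in> acar A)"

datatype trm = Var nat | Meet trm trm | Join trm trm | Neg trm | J2t trm | Zero | One

fun tvars :: "trm \<Rightarrow> nat set" where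
  "tvars (Var n) = {n}"
| "tvars (Meet s t) = tvars s \<union> tvars t"
| "tvars (Join s t) = tvars s \<union> tvars t"
| "tvars (Neg s) = tvars s"
| "tvars (J2t s) = tvars s"
| "tvars Zero = {}"
| "tvars One = {}"

fun eval :: "('a, 'b) alg_scheme \<Rightarrow> (nat \<Rightarrow> 'a) \<Rightarrow> trm \<Rightarrow> 'a" where
  "eval A v (Var n) = v n"
| "eval A v (Meet s t) = ameet A (eval A v s) (eval A v t)"
| "eval A v (Join s t) = ajoin A (eval A v s) (eval A v t)"
| "eval A v (Neg s) = aneg A (eval A v s)"
| "eval A v (J2t s) = aJ2 A (eval A v s)"
| "eval A v Zero = azero A"
| "eval A v One = aone A"

definition sat :: "('a, 'b) alg_scheme \<Rightarrow> trm \<Rightarrow> trm \<Rightarrow> bool" where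
  "sat A s t \<longleftrightarrow> (\<forall>v. (\<forall>n. v n \<in> acar A) \<longrightarrow> eval A v s = eval A v t)"

definition wk_pow :: "'i set \<Rightarrow> ('i \<Rightarrow> wk) alg" where
  "wk_pow I = \<lparr> acar = (I \<rightarrow>\<^sub>E (UNIV :: wk set)),
     ameet = (\<lambda>f g. \<lambda>i\<in>I. wk_and (f i) (g i)),
     ajoin = (\<lambda>f g. \<lambda>i\<in>I. wk_or (f i) (g i)),
     aneg = (\<lambda>f. \<lambda>i\<in>I. wk_neg (f i)),
     aJ2 = (\<lambda>f. \<lambda>i\<in>I. wk_J2 (f i)),
     azero = (\<lambda>i\<in>I. F),
     aone = (\<lambda>i\<in>I. T) \<rparr>"

definition subalg_set :: "'p set \<Rightarrow> ('p, 'c) alg_scheme \<Rightarrow> bool" where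
  "subalg_set B P \<longleftrightarrow> B \<subseteq> acar P \<and> azero P \<in> B \<and> aone P \<in> B \<and>
     (\<forall>x\<in>B. \<forall>y\<in>B. ameet P x y \<in> B \<and> ajoin P x y \<in> B) \<and>
     (\<forall>x\<in>B. aneg P x \<in> B \<and> aJ2 P x \<in> B)"

definition surj_hom :: "'p set \<Rightarrow> ('p, 'c) alg_scheme \<Rightarrow> ('p \<Rightarrow> 'a) \<Rightarrow> ('a, 'b) alg_scheme \<Rightarrow> bool" where
  "surj_hom B P h A \<longleftrightarrow> h ` B = acar A \<and>
     h (azero P) = azero A \<and> h (aone P) = aone A \<and>
     (\<forall>x\<in>B. \<forall>y\<in>B. h (ameet P x y) = ameet A (h x) (h y) \<and> h (ajoin P x y) = ajoin A (h x) (h y)) \<and>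
     (\<forall>x\<in>B. h (aneg P x) = aneg A (h x) \<and> h (aJ2 P x) = aJ2 A (h x))"

text \<open>A \<in> V(BCA) = HSP(WK^e): A is a homomorphic image of a subalgebra of a
  power of WK^e.  The index sets range over subsets of the type nat \<Rightarrow> wk, which
  has the cardinality of the continuum; this suffices for all algebras with
  countable carrier (in particular carriers of type nat, as used below).\<close>
definition in_VBCA :: "('a, 'b) alg_scheme \<Rightarrow> bool" where
  "in_VBCA A \<longleftrightarrow> is_alg A \<and>
     (\<exists>(I :: (nat \<Rightarrow> wk) set) B h. subalg_set B (wk_pow I) \<and> surj_hom B (wk_pow I) h A)"

definition in_BA :: "('a, 'b) alg_scheme \<Rightarrow> bool" where
  "in_BA A \<longleftrightarrow> in_VBCA A \<and> sat A (J2t (Var 0)) (Var 0)"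

definition in_SL :: "('a, 'b) alg_scheme \<Rightarrow> bool" where
  "in_SL A \<longleftrightarrow> in_VBCA A \<and> sat A (J2t (Var 0)) One"

end

theory Submission
  imports Defs
begin

fun weval :: "(nat \<Rightarrow> wk) \<Rightarrow> trm \<Rightarrow> wk" where
  "weval u (Var n) = u n"
| "weval u (Meet s t) = wk_and (weval u s) (weval u t)"
| "weval u (Join s t) = wk_or (weval u s) (weval u t)"
| "weval u (Neg s) = wk_neg (weval u s)"
| "weval u (J2t s) = wk_J2 (weval u s)"
| "weval u Zero = F"
| "weval u One = T"

lemma eval_pow:
  assumes "\<forall>n. w n \<in> acar (wk_pow I)"
  shows "eval (wk_pow I) w t = (\<lambda>i\<in>I. weval (\<lambda>n. w n i) t)"
proof (induction t)
  case (Var n)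
  have "w n \<in> I \<rightarrow>\<^sub>E UNIV" using assms by (simp add: wk_pow_def)
  then show ?case by (auto simp: PiE_def extensional_def restrict_def)
qed (auto simp: wk_pow_def restrict_def)

lemma eval_sub:
  assumes "subalg_set B P" "\<forall>n. w n \<in> B"
  shows "eval P w t \<in> B"
  using assms by (induction t) (auto simp: subalg_set_def)

lemma eval_hom:
  assumes "subalg_set B P" "surj_hom B P h A" "\<forall>n. w n \<in> B"
  shows "h (eval P w t) = eval A (h \<circ> w) t"
  using assms eval_sub[OF assms(1) assms(3)]
  by (induction t) (auto simp: surj_hom_def)

lemma transfer:
  fixes A :: "('a, 'b) alg_scheme"
  assumes "in_VBCA A" "\<And>u. weval u s = weval u t"
  shows "sat A s t"
  unfolding sat_def
proof (intro allI impI)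
  fix v :: "nat \<Rightarrow> 'a" assume v: "\<forall>n. v n \<in> acar A"
  obtain I :: "(nat \<Rightarrow> wk) set" and B h where sb: "subalg_set B (wk_pow I)"
    and hm: "surj_hom B (wk_pow I) h A" using assms(1) unfolding in_VBCA_def by blast
  have img: "h ` B = acar A" using hm by (simp add: surj_hom_def)
  define w where "w n = (SOME b. b \<in> B \<and> h b = v n)" for n
  have w: "w n \<in> B \<and> h (w n) = v n" for n
  proof -
    have "\<exists>b. b \<in> B \<and> h b = v n" using v img by (metis imageE)
    then show ?thesis unfolding w_def by (rule someI_ex)
  qed
  have hw: "h \<circ> w = v" using w by auto
  have wP: "\<forall>n. w n \<in> acar (wk_pow I)" using w sb by (auto simp: subalg_set_def)
  have "eval A v s = h (eval (wk_pow I) w s)" using eval_hom[OF sb hm] w hw by auto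
  also have "\<dots> = h (eval (wk_pow I) w t)" using eval_pow[OF wP] assms(2) by simp
  also have "\<dots> = eval A v t" using eval_hom[OF sb hm] w hw by auto
  finally show "eval A v s = eval A v t" .
qed

lemma allwk: "(\<forall>x::wk. P x) \<longleftrightarrow> P F \<and> P U \<and> P T"
  by (metis wk.exhaust)

theorem theorem4p10:
  shows "\<exists>\<phi> :: trm. tvars \<phi> \<subseteq> {0, 1} \<and>
    (\<forall>A :: nat alg. in_BA A \<longrightarrow> sat A \<phi> (Var 0)) \<and>
    (\<forall>A :: nat alg. in_SL A \<longrightarrow> sat A \<phi> (Var 1))"
proof (intro exI conjI allI impI)
  let ?phi = "Join (J2t (Var 0)) (Meet (Var 1) (Neg (Var 1)))"
  show "tvars ?phi \<subseteq> {0, 1}" by auto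
next
  fix A :: "nat alg" assume BA: "in_BA A"
  have V: "in_VBCA A" using BA by (simp add: in_BA_def)
  have J: "aJ2 A c = c" if "c \<in> acar A" for c
  proof -
    have "sat A (J2t (Var 0)) (Var 0)" using BA by (simp add: in_BA_def)
    then show ?thesis unfolding sat_def
      by (erule_tac x="\<lambda>_. c" in allE) (simp add: that)
  qed
  have I: "sat A (Join (J2t (Var 0)) (Meet (J2t (Var 1)) (Neg (J2t (Var 1))))) (J2t (Var 0))"
  proof (rule transfer[OF V])
    fix u show "weval u (Join (J2t (Var 0)) (Meet (J2t (Var 1)) (Neg (J2t (Var 1))))) = weval u (J2t (Var 0))"
      by (cases "u 0"; cases "u 1") auto
  qed
  show "sat A (Join (J2t (Var 0)) (Meet (Var 1) (Neg (Var 1)))) (Var 0)"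
    unfolding sat_def
  proof (intro allI impI)
    fix v :: "nat \<Rightarrow> nat" assume v: "\<forall>n. v n \<in> acar A"
    have "eval A v (Join (J2t (Var 0)) (Meet (J2t (Var 1)) (Neg (J2t (Var 1))))) = eval A v (J2t (Var 0))"
      using I v unfolding sat_def by blast
    then show "eval A v (Join (J2t (Var 0)) (Meet (Var 1) (Neg (Var 1)))) = eval A v (Var 0)"
      using J v by simp
  qed
next
  fix A :: "nat alg" assume SL: "in_SL A"
  have V: "in_VBCA A" using SL by (simp add: in_SL_def)
  have J: "aJ2 A c = aone A" if "c \<in> acar A" for c
  proof -
    have "sat A (J2t (Var 0)) One" using SL by (simp add: in_SL_def)
    then show ?thesis unfolding sat_def
      by (erule_tac x="\<lambda>_. c" in allE) (simp add: that)
  qed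
  have z: "azero A \<in> acar A" using V by (simp add: in_VBCA_def is_alg_def)
  have I1: "sat A (Join (J2t Zero) (Meet (Var 1) (Neg (Var 1)))) (Meet (Var 1) (J2t Zero))"
  proof (rule transfer[OF V])
    fix u show "weval u (Join (J2t Zero) (Meet (Var 1) (Neg (Var 1)))) = weval u (Meet (Var 1) (J2t Zero))"
      by (cases "u 1") auto
  qed
  have I2: "sat A (Meet (Var 1) One) (Var 1)"
  proof (rule transfer[OF V])
    fix u show "weval u (Meet (Var 1) One) = weval u (Var 1)"
      by (cases "u 1") auto
  qed
  show "sat A (Join (J2t (Var 0)) (Meet (Var 1) (Neg (Var 1)))) (Var 1)"
    unfolding sat_def
  proof (intro allI impI)
    fix v :: "nat \<Rightarrow> nat" assume v: "\<forall>n. v n \<in> acar A"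
    have e1: "eval A v (Join (J2t Zero) (Meet (Var 1) (Neg (Var 1)))) = eval A v (Meet (Var 1) (J2t Zero))"
      using I1 v unfolding sat_def by blast
    have e2: "eval A v (Meet (Var 1) One) = eval A v (Var 1)"
      using I2 v unfolding sat_def by blast
    show "eval A v (Join (J2t (Var 0)) (Meet (Var 1) (Neg (Var 1)))) = eval A v (Var 1)"
      using e1 e2 J[OF z] J v by simp
  qed
qed

end
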